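(* For every integer $m\ge1$, as formal power series (or entire functions) in $z$, $$\sum_{n\ge0}\frac{(m+n-1)!}{(2m+n-1)!}\,\frac{z^n}{n!}=\frac{1}{z^{2m-1}}\sum_{k=0}^{m-1}(-1)^k\binom{m+k-1}{2k}2^k(2k-1)!!\,z^{m-1-k}\big(e^z+(-1)^{m+k}\big),$$ where $(2k-1)!!=1\cdot3\cdots(2k-1)$ and $(-1)!!=1$. *)

theory Defs
  imports Complex_Main
begin

text \<open>Odd double factorial: odd_dfact k = (2k-1)!! = 1*3*...*(2k-1), with odd_dfact 0 = (-1)!! = 1.\<close>
definition odd_dfact :: "nat \<Rightarrow> nat" where
  "odd_dfact k = (\<Prod>i=1..k. 2*i - 1)"

end

theory Submission imports Defs "HOL-Computational_Algebra.Formal_Power_Series" begin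

definition pi_c :: "nat \<Rightarrow> nat \<Rightarrow> complex" where
  "pi_c p i = (-1)^(p-i) * fact (2*p-i) / (fact i * fact (p-i))"

lemma lemA:
  assumes "i \<le> p"
  shows "pi_c p i * fact i = fact p * ((- of_nat p - 1) gchoose (p-i))"
proof -
  have "((- of_nat p - 1 :: complex) gchoose (p-i)) = (-(of_nat p + 1)) gchoose (p-i)" by simp
  also have "\<dots> = (-1)^(p-i) * ((of_nat p + 1 + of_nat (p-i) - 1) gchoose (p-i))"
    by (rule gbinomial_minus)
  also have "(of_nat p + 1 + of_nat (p-i) - 1 :: complex) = of_nat (2*p-i)" using assms by simp
  also have "(of_nat (2*p-i) gchoose (p-i) :: complex) = of_nat ((2*p-i) choose (p-i))"
    by (simp add: binomial_gbinomial)
  also have "\<dots> = fact (2*p-i) / (fact (p-i) * fact p)"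
    using assms by (subst binomial_fact) (auto intro!: arg_cong[where f=fact])
  finally show ?thesis unfolding pi_c_def by (simp add: field_simps)
qed

lemma lemB:
  "(if i \<le> N then fact N / fact (N-i) else 0) = fact i * ((of_nat N :: complex) gchoose i)"
proof (cases "i \<le> N")
  case True
  then show ?thesis by (simp add: binomial_gbinomial[symmetric] binomial_fact field_simps)
next
  case False
  then show ?thesis by (simp add: binomial_gbinomial[symmetric])
qed

lemma lemS:
  "(\<Sum>i=0..p. pi_c p i * (if i \<le> N then fact N / fact (N-i) else 0))
     = fact p * ((of_nat N - of_nat p - 1) gchoose p)"
proof -
  have "(\<Sum>i=0..p. pi_c p i * (if i \<le> N then fact N / fact (N-i) else 0))
      = (\<Sum>i=0..p. (pi_c p i * fact i) * ((of_nat N :: complex) gchoose i))"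
    by (simp add: lemB mult.assoc)
  also have "\<dots> = (\<Sum>i=0..p. fact p * (((of_nat N :: complex) gchoose i) * ((- of_nat p - 1) gchoose (p-i))))"
    by (rule sum.cong) (simp_all add: lemA)
  also have "\<dots> = fact p * (\<Sum>i=0..p. ((of_nat N :: complex) gchoose i) * ((- of_nat p - 1) gchoose (p-i)))"
    by (simp add: sum_distrib_left)
  also have "\<dots> = fact p * ((of_nat N + (- of_nat p - 1)) gchoose p)"
    by (simp only: gbinomial_Vandermonde)
  also have "(of_nat N + (- of_nat p - 1) :: complex) = of_nat N - of_nat p - 1" by simp
  finally show ?thesis .
qed

lemma key:
  "(\<Sum>i=0..p. pi_c p i * (if i \<le> N then 1 / fact (N-i) else 0))
     - (if N \<le> p then pi_c p N * (-1)^N else 0)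
   = (if 2*p+1 \<le> N then fact (N-p-1) / (fact N * fact (N-2*p-1)) else (0::complex))"
proof -
  have fN: "(fact N :: complex) \<noteq> 0" by simp
  have L: "fact N * (\<Sum>i=0..p. pi_c p i * (if i \<le> N then 1 / fact (N-i) else 0))
     = fact p * ((of_nat N - of_nat p - 1) gchoose p)"
    unfolding lemS[symmetric] sum_distrib_left by (rule sum.cong) auto
  have "fact N * ((\<Sum>i=0..p. pi_c p i * (if i \<le> N then 1 / fact (N-i) else 0))
     - (if N \<le> p then pi_c p N * (-1)^N else 0))
   = fact N * (if 2*p+1 \<le> N then fact (N-p-1) / (fact N * fact (N-2*p-1)) else (0::complex))"
  proof (cases "p < N")
    case True
    have e: "(of_nat N - of_nat p - 1 :: complex) = of_nat (N-p-1)" using True by (simp add: of_nat_diff)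
    have g: "((of_nat N - of_nat p - 1 :: complex) gchoose p) = of_nat ((N-p-1) choose p)"
      unfolding e by (simp add: binomial_gbinomial)
    show ?thesis
    proof (cases "2*p+1 \<le> N")
      case True2: True
      have "(of_nat ((N-p-1) choose p) :: complex) = fact (N-p-1) / (fact p * fact (N-2*p-1))"
        using True2 by (subst binomial_fact) (auto intro!: arg_cong[where f=fact])
      then show ?thesis unfolding right_diff_distrib L g using True True2 fN by simp
    next
      case False
      have "(N-p-1) choose p = 0" using True False by simp
      then show ?thesis unfolding right_diff_distrib L g using True False by simp
    qed
  next
    case False
    have e: "(of_nat N - of_nat p - 1 :: complex) = - of_nat (p+1-N)" using False by (simp add: of_nat_diff)
    have "((of_nat N - of_nat p - 1 :: complex) gchoose p)
        = (-1)^p * ((of_nat (p+1-N) + of_nat p - 1) gchoose p)"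
      unfolding e by (rule gbinomial_minus)
    also have "(of_nat (p+1-N) + of_nat p - 1 :: complex) = of_nat (2*p-N)" using False by (simp add: of_nat_diff)
    also have "(of_nat (2*p-N) gchoose p :: complex) = of_nat ((2*p-N) choose p)" by (simp add: binomial_gbinomial)
    also have "\<dots> = fact (2*p-N) / (fact p * fact (p-N))"
      using False by (subst binomial_fact) (auto intro!: arg_cong[where f=fact])
    finally have g: "((of_nat N - of_nat p - 1 :: complex) gchoose p) = (-1)^p * (fact (2*p-N) / (fact p * fact (p-N)))" .
    have pw: "(-1::complex)^(p-N) * (-1)^N = (-1)^p" using False by (simp add: power_add[symmetric])
    have "fact N * (pi_c p N * (-1)^N) = (-1)^p * fact (2*p-N) / fact (p-N)"
      unfolding pi_c_def using pw fN by (simp add: field_simps)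
    then show ?thesis unfolding right_diff_distrib L g using False by simp
  qed
  then show ?thesis using fN by simp
qed

lemma odd_dfact_fact: "odd_dfact k * 2^k * fact k = fact (2*k)"
proof (induction k)
  case 0 then show ?case by (simp add: odd_dfact_def)
next
  case (Suc k)
  have o: "odd_dfact (Suc k) = odd_dfact k * (2*k+1)"
    unfolding odd_dfact_def by (simp add: prod.cl_ivl_Suc)
  have "fact (2 * Suc k) = (2*k+2) * ((2*k+1) * (fact (2*k) :: nat))"
    by (simp add: algebra_simps)
  also have "\<dots> = (2*k+2) * ((2*k+1) * (odd_dfact k * 2^k * fact k))" using Suc by simp
  also have "\<dots> = odd_dfact (Suc k) * 2^Suc k * fact (Suc k)" unfolding o by (simp add: algebra_simps)
  finally show ?case by simp
qed

lemma coef: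
  assumes "k \<le> p"
  shows "(-1) ^ k * of_nat ((p + k) choose (2*k)) * 2 ^ k * of_nat (odd_dfact k) = pi_c p (p-k)"
proof -
  have c: "(of_nat ((p + k) choose (2*k)) :: complex) = fact (p+k) / (fact (2*k) * fact (p-k))"
    using assms by (subst binomial_fact) (auto intro!: arg_cong[where f=fact])
  have d: "(fact (2*k) :: complex) = of_nat (odd_dfact k) * 2^k * fact k"
    by (metis odd_dfact_fact of_nat_fact of_nat_mult of_nat_numeral of_nat_power)
  have e: "2*p - (p-k) = p+k" "p - (p-k) = k" using assms by auto
  have nz: "odd_dfact k \<noteq> 0" using odd_dfact_fact[of k] by (metis fact_nonzero mult_eq_0_iff)
  show ?thesis unfolding pi_c_def e c d using nz by (simp add: field_simps)
qed

lemma sign: "i \<le> p \<Longrightarrow> (-1::complex)^(Suc p + (p-i)) = - ((-1)^i)"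
  by (simp add: minus_one_power_iff)

lemma exp_shift:
  fixes z :: complex
  shows "(\<lambda>N. if i \<le> N then z^N / fact (N-i) else 0) sums (z^i * exp z)"
proof -
  have e: "(\<lambda>n. z^n / fact n) sums exp z"
    using exp_converges[of z] by (simp add: scaleR_conv_of_real divide_inverse mult.commute)
  define f where "f = (\<lambda>N. if i \<le> N then z^N / fact (N-i) else (0::complex))"
  have "(\<lambda>n. z^i * (z^n / fact n)) sums (z^i * exp z)" by (rule sums_mult[OF e])
  moreover have "(\<lambda>n. f (n+i)) = (\<lambda>n. z^i * (z^n / fact n))"
    by (auto simp: f_def power_add)
  ultimately have "(\<lambda>n. f (n+i)) sums (z^i * exp z)" by simp
  moreover have "(\<Sum>j<i. f j) = 0" by (auto simp: f_def)
  ultimately show ?thesis unfolding f_def[symmetric] by (simp add: sums_iff_shift)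
qed

theorem mainTheorem17:
  fixes m :: nat and z :: complex
  assumes "m \<ge> 1" and "z \<noteq> 0"
  shows "(\<lambda>n. fact (m + n - 1) / fact (2*m + n - 1) * z ^ n / fact n) sums
           (1 / z ^ (2*m - 1) *
             (\<Sum>k=0..m-1. (-1) ^ k * of_nat ((m + k - 1) choose (2*k)) * 2 ^ k
                 * of_nat (odd_dfact k) * z ^ (m - 1 - k) * (exp z + (-1) ^ (m + k))))"
proof -
  obtain p where m: "m = Suc p" using assms(1) by (cases m) auto
  define R where "R i = pi_c p i * (z^i * exp z) + pi_c p i * (- ((-1)^i)) * z^i" for i
  have S1: "(\<Sum>k=0..m-1. (-1) ^ k * of_nat ((m + k - 1) choose (2*k)) * 2 ^ k
                 * of_nat (odd_dfact k) * z ^ (m - 1 - k) * (exp z + (-1) ^ (m + k)))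
        = (\<Sum>i=0..p. R i)"
  proof -
    have "(\<Sum>k=0..m-1. (-1) ^ k * of_nat ((m + k - 1) choose (2*k)) * 2 ^ k
                 * of_nat (odd_dfact k) * z ^ (m - 1 - k) * (exp z + (-1) ^ (m + k)))
       = (\<Sum>k=0..p. ((-1) ^ k * of_nat ((p + k) choose (2*k)) * 2 ^ k
                 * of_nat (odd_dfact k)) * z ^ (p - k) * (exp z + (-1) ^ (Suc p + k)))"
      unfolding m by (simp add: mult.assoc)
    also have "\<dots> = (\<Sum>i=0..p. ((-1) ^ (p-i) * of_nat ((p + (p-i)) choose (2*(p-i))) * 2 ^ (p-i)
                 * of_nat (odd_dfact (p-i))) * z ^ (p - (p-i)) * (exp z + (-1) ^ (Suc p + (p-i))))"
      by (subst sum.atLeastAtMost_rev) simp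
    also have "\<dots> = (\<Sum>i=0..p. R i)"
    proof (rule sum.cong)
      fix i assume i: "i \<in> {0..p}"
      then have "p - (p-i) = i" by auto
      then show "((-1) ^ (p-i) * of_nat ((p + (p-i)) choose (2*(p-i))) * 2 ^ (p-i)
                 * of_nat (odd_dfact (p-i))) * z ^ (p - (p-i)) * (exp z + (-1) ^ (Suc p + (p-i))) = R i"
        unfolding coef[of "p-i" p, simplified] using i sign[of i p]
        by (simp add: R_def algebra_simps)
    qed simp
    finally show ?thesis .
  qed
  define g where "g N = (\<Sum>i=0..p. pi_c p i * (if i \<le> N then z^N / fact (N-i) else 0)
                   + (if N = i then pi_c p i * (- ((-1)^i)) * z^N else 0))" for N
  have gs: "g sums (\<Sum>i=0..p. R i)"
    unfolding g_def R_def
  proof (rule sums_sum)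
    fix i assume "i \<in> {0..p}"
    show "(\<lambda>N. pi_c p i * (if i \<le> N then z^N / fact (N-i) else 0)
                   + (if N = i then pi_c p i * (- ((-1)^i)) * z^N else 0))
          sums (pi_c p i * (z^i * exp z) + pi_c p i * (- ((-1)^i)) * z^i)"
      by (intro sums_add sums_mult exp_shift) (rule sums_single[where f="\<lambda>N. pi_c p i * (- ((-1)^i)) * z^N"])
  qed
  define h where "h N = z^N * (if 2*p+1 \<le> N then fact (N-p-1) / (fact N * fact (N-2*p-1)) else (0::complex))" for N
  have gh: "g = h"
  proof
    fix N
    have "g N = z^N * (\<Sum>i=0..p. pi_c p i * (if i \<le> N then 1 / fact (N-i) else 0))
               - z^N * (if N \<le> p then pi_c p N * (-1)^N else 0)"
      unfolding g_def sum.distrib sum_distrib_left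
      by (auto intro!: sum.cong simp: algebra_simps)
    also have "\<dots> = h N" unfolding h_def key[symmetric] by (simp add: right_diff_distrib)
    finally show "g N = h N" .
  qed
  have hs: "(\<lambda>n. h (n + (2*p+1))) sums (\<Sum>i=0..p. R i)"
  proof -
    have "(\<Sum>j<2*p+1. h j) = 0" by (auto simp: h_def)
    moreover have "h sums (\<Sum>i=0..p. R i)" using gs gh by simp
    ultimately show ?thesis by (simp only: sums_iff_shift add_0_right)
  qed
  have "(\<lambda>n. 1 / z^(2*p+1) * h (n + (2*p+1))) sums (1 / z^(2*p+1) * (\<Sum>i=0..p. R i))"
    by (rule sums_mult[OF hs])
  moreover have "(\<lambda>n. 1 / z^(2*p+1) * h (n + (2*p+1)))
       = (\<lambda>n. fact (m + n - 1) / fact (2*m + n - 1) * z ^ n / fact n)"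
  proof
    fix n
    have a: "m + n - 1 = n + p" "2*m + n - 1 = n + (2*p+1)" using m by auto
    have b: "h (n + (2*p+1)) = z^(n + (2*p+1)) * (fact (n+p) / (fact (n+(2*p+1)) * fact n))"
      unfolding h_def by (simp add: algebra_simps)
    show "1 / z^(2*p+1) * h (n + (2*p+1)) = fact (m + n - 1) / fact (2*m + n - 1) * z ^ n / fact n"
      unfolding b a using assms(2) by (simp add: power_add field_simps)
  qed
  ultimately show ?thesis unfolding S1 using m by simp
qed

end
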